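(* Let $f_1,f_2\in\mathcal{BC}^1_g([a,b],\mathbb F)$. Then $f_1f_2\in\mathcal{BC}^1_g([a,b],\mathbb F)$ if and only if \[(f_1)'_g(t)(f_2)'_g(t)=0\quad\text{for all }t\in((a^*,b)\cap A_g)\setminus H_g,\] where \[A_g=\{t\in\mathbb R: \sup\{s\in [a,b] : g(s)=g(t)\}\in D_g\},\] \[H_g=\{t\in\mathbb R: t\in(s_1,s_2]\text{ for some }s_1,s_2\in D_g\text{ with }(s_1,s_2)\subset C_g\}.\]
   Context: Let $g:\mathbb R\to\mathbb R$ be nondecreasing and left-continuous, $\mathbb F\in\{\mathbb R,\mathbb C\}$. $\Delta g(t)=g(t^+)-g(t)$, $D_g=\{t:\Delta g(t)>0\}$, $C_g=\{t: g\text{ constant on }(t-\varepsilon,t+\varepsilon)\text{ for some }\varepsilon>0\}=\bigcup_{n\in\Lambda}(a_n,b_n)$ (disjoint union of connected components), $N_g^-=\{a_n\}\setminus D_g$, $N_g^+=\{b_n\}\setminus D_g$. Fix $a<b$ with $a\notin N_g^-\cup D_g$ and $b\notin C_g\cup N_g^+\cup D_g$. For $t\in[a,b]$, $t^*=t$ if $t\notin C_g$ and $t^*=b_n$ if $t\in(a_n,b_n)$. The $g$-derivative of $u:[a,b]\to\mathbb F$ at $t$ is $u'_g(t)=\lim_{s\to t}\frac{u(s)-u(t)}{g(s)-g(t)}$ if $t\notin D_g\cup C_g$ and $u'_g(t)=\lim_{s\to t^{*+}}\frac{u(s)-u(t^* )}{g(s)-g(t^* )}$ if $t\in D_g\cup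 C_g$, provided the finite limit exists; limits are over $s\in[a,b]$ with nonzero denominator, and at points of $N_g^+\cup\{a\}$ only the right-hand limit, at points of $N_g^-\cup\{b\}$ only the left-hand limit is taken. A function $u:[a,b]\to\mathbb F$ is $g$-continuous at $t$ if for every $\varepsilon>0$ there is $\delta>0$ with $|u(t)-u(s)|<\varepsilon$ for all $s\in[a,b]$ with $|g(t)-g(s)|<\delta$. $\mathcal{BC}_g([a,b],\mathbb F)$ is the set of bounded functions $[a,b]\to\mathbb F$ that are $g$-continuous at every point of $[a,b]$, and $\mathcal{BC}^1_g([a,b],\mathbb F)$ is the set of $f\in\mathcal{BC}_g([a,b],\mathbb F)$ that are $g$-differentiable at every point of $[a,b]$ with $f'_g\in\mathcal{BC}_g([a,b],\mathbb F)$. *)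

theory Defs
  imports "HOL-Analysis.Analysis"
begin

definition gjump :: "(real \<Rightarrow> real) \<Rightarrow> real \<Rightarrow> real" where
  "gjump g t = Lim (at_right t) g - g t"

definition Dg :: "(real \<Rightarrow> real) \<Rightarrow> real set" where
  "Dg g = {t. gjump g t > 0}"

definition Cg :: "(real \<Rightarrow> real) \<Rightarrow> real set" where
  "Cg g = {t. \<exists>\<epsilon>>0. \<forall>s\<in>{t-\<epsilon><..<t+\<epsilon>}. g s = g t}"

definition Ng_minus :: "(real \<Rightarrow> real) \<Rightarrow> real set" where
  "Ng_minus g = {Inf C | C. C \<in> components (Cg g) \<and> bdd_below C} - Dg g"

definition Ng_plus :: "(real \<Rightarrow> real) \<Rightarrow> real set" where
  "Ng_plus g = {Sup C | C. C \<in> components (Cg g) \<and> bdd_above C} - Dg g"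

definition tstar :: "(real \<Rightarrow> real) \<Rightarrow> real \<Rightarrow> real" where
  "tstar g t = (if t \<in> Cg g then Sup (connected_component_set (Cg g) t) else t)"

definition has_gderiv ::
  "(real \<Rightarrow> real) \<Rightarrow> real \<Rightarrow> real \<Rightarrow> (real \<Rightarrow> 'a::real_normed_field) \<Rightarrow> real \<Rightarrow> 'a \<Rightarrow> bool" where
  "has_gderiv g a b u t L \<longleftrightarrow>
     (if t \<in> Dg g \<union> Cg g then
        ((\<lambda>s. (u s - u (tstar g t)) / of_real (g s - g (tstar g t))) \<longlongrightarrow> L)
          (at (tstar g t) within {s \<in> {a..b}. tstar g t < s \<and> g s \<noteq> g (tstar g t)})
      else
        ((\<lambda>s. (u s - u t) / of_real (g s - g t)) \<longlongrightarrow> L)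
          (at t within {s \<in> {a..b}. g s \<noteq> g t}))"

definition g_differentiable ::
  "(real \<Rightarrow> real) \<Rightarrow> real \<Rightarrow> real \<Rightarrow> (real \<Rightarrow> 'a::real_normed_field) \<Rightarrow> real \<Rightarrow> bool" where
  "g_differentiable g a b u t \<longleftrightarrow> (\<exists>L. has_gderiv g a b u t L)"

definition gderiv ::
  "(real \<Rightarrow> real) \<Rightarrow> real \<Rightarrow> real \<Rightarrow> (real \<Rightarrow> 'a::real_normed_field) \<Rightarrow> real \<Rightarrow> 'a" where
  "gderiv g a b u t = (SOME L. has_gderiv g a b u t L)"

definition g_continuous_at ::
  "(real \<Rightarrow> real) \<Rightarrow> real \<Rightarrow> real \<Rightarrow> (real \<Rightarrow> 'a::real_normed_vector) \<Rightarrow> real \<Rightarrow> bool" where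
  "g_continuous_at g a b u t \<longleftrightarrow>
     (\<forall>\<epsilon>>0. \<exists>\<delta>>0. \<forall>s\<in>{a..b}. \<bar>g t - g s\<bar> < \<delta> \<longrightarrow> norm (u t - u s) < \<epsilon>)"

definition BCg ::
  "(real \<Rightarrow> real) \<Rightarrow> real \<Rightarrow> real \<Rightarrow> (real \<Rightarrow> 'a::real_normed_vector) \<Rightarrow> bool" where
  "BCg g a b u \<longleftrightarrow> bounded (u ` {a..b}) \<and> (\<forall>t\<in>{a..b}. g_continuous_at g a b u t)"

definition BC1g ::
  "(real \<Rightarrow> real) \<Rightarrow> real \<Rightarrow> real \<Rightarrow> (real \<Rightarrow> 'a::real_normed_field) \<Rightarrow> bool" where
  "BC1g g a b u \<longleftrightarrow> BCg g a b u \<and> (\<forall>t\<in>{a..b}. g_differentiable g a b u t)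
                     \<and> BCg g a b (gderiv g a b u)"

definition Ag :: "(real \<Rightarrow> real) \<Rightarrow> real \<Rightarrow> real \<Rightarrow> real set" where
  "Ag g a b = {t. Sup {s \<in> {a..b}. g s = g t} \<in> Dg g}"

definition Hg :: "(real \<Rightarrow> real) \<Rightarrow> real set" where
  "Hg g = {t. \<exists>s1 s2. s1 \<in> Dg g \<and> s2 \<in> Dg g \<and> {s1<..<s2} \<subseteq> Cg g \<and> t \<in> {s1<..s2}}"

end

theory Submission
  imports Defs
begin


locale gsetup =
  fixes g :: "real \<Rightarrow> real" and a b :: real
  assumes mono: "mono g"
    and leftcont: "\<And>t. (g \<longlongrightarrow> g t) (at_left t)"
    and ab: "a < b"
    and a_ok: "a \<notin> Ng_minus g \<union> Dg g"
    and b_ok: "b \<notin> Cg g \<union> Ng_plus g \<union> Dg g"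
begin

lemma monoD': "x \<le> y \<Longrightarrow> g x \<le> g y"
  using mono by (simp add: monoD)

definition gp :: "real \<Rightarrow> real" where "gp t = Inf (g ` {t<..})"

lemma gp_bdd: "bdd_below (g ` {t<..})"
  by (rule bdd_belowI[of _ "g t"]) (auto intro: monoD')

lemma gp_le: "t < y \<Longrightarrow> gp t \<le> g y"
  unfolding gp_def by (rule cInf_lower) (auto simp: gp_bdd)

lemma gp_ge: "g t \<le> gp t"
  unfolding gp_def by (rule cInf_greatest) (auto intro: monoD' gt_ex)

lemma right_lim: "(g \<longlongrightarrow> gp t) (at_right t)"
proof -
  have "(g \<longlongrightarrow> Inf (g ` ({t<..} \<inter> UNIV))) (at t within ({t<..} \<inter> UNIV))"
    by (rule Lim_right_bound[where K="g t"]) (auto intro: monoD')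
  then show ?thesis unfolding gp_def by simp
qed

lemma gjump_eq: "gjump g t = gp t - g t"
  unfolding gjump_def using right_lim tendsto_Lim by (metis trivial_limit_at_right_real)

lemma gjump_nonneg: "gjump g t \<ge> 0"
  using gp_ge gjump_eq by simp

lemma gjump_le: "x < y \<Longrightarrow> gjump g x \<le> g y - g x"
  using gp_le gjump_eq by simp

lemma gp_approx: "\<epsilon> > 0 \<Longrightarrow> \<exists>r>t. g r < gp t + \<epsilon>"
proof -
  assume e: "\<epsilon> > 0"
  have "Inf (g ` {t<..}) < gp t + \<epsilon>" using e unfolding gp_def by simp
  then obtain x where "x \<in> g ` {t<..}" "x < gp t + \<epsilon>"
    using cInf_less_iff[of "g ` {t<..}"] gp_bdd by (auto simp: gt_ex)
  then show ?thesis by auto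
qed

lemma left_approx: "\<epsilon> > 0 \<Longrightarrow> d < t \<Longrightarrow> \<exists>r. d < r \<and> r < t \<and> g r > g t - \<epsilon>"
proof -
  assume e: "\<epsilon> > 0" and d: "d < t"
  have "eventually (\<lambda>s. dist (g s) (g t) < \<epsilon>) (at_left t)"
    using leftcont e tendsto_iff by blast
  then obtain c where c: "c < t" "\<And>y. c < y \<Longrightarrow> y < t \<Longrightarrow> dist (g y) (g t) < \<epsilon>"
    unfolding eventually_at_left_field by blast
  define r where "r = (max c d + t) / 2"
  have "c < r" "d < r" "r < t" using c d unfolding r_def by auto
  with c(2)[of r] show ?thesis by (auto simp: dist_real_def)
qed

lemma Cg_iff: "t \<in> Cg g \<longleftrightarrow> (\<exists>\<epsilon>>0. \<forall>s. t - \<epsilon> < s \<and> s < t + \<epsilon> \<longrightarrow> g s = g t)"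
  unfolding Cg_def Ball_def mem_Collect_eq greaterThanLessThan_iff by (rule refl)

lemma Cg_nbhd:
  assumes "t \<in> Cg g" shows "\<exists>e>0. {t-e<..<t+e} \<subseteq> Cg g \<and> (\<forall>s\<in>{t-e<..<t+e}. g s = g t)"
proof -
  from assms[unfolded Cg_iff] obtain e where e1: "e > 0"
    and e2: "\<forall>s. t - e < s \<and> s < t + e \<longrightarrow> g s = g t"
    by blast
  have sub: "{t-e/2<..<t+e/2} \<subseteq> Cg g"
  proof
    fix s assume s: "s \<in> {t-e/2<..<t+e/2}"
    have gs: "g s = g t" using s e2[rule_format, of s] by simp
    have "\<forall>u. s - e/2 < u \<and> u < s + e/2 \<longrightarrow> g u = g s"
    proof (intro allI impI)
      fix u assume "s - e/2 < u \<and> u < s + e/2"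
      then have "t - e < u \<and> u < t + e" using s by simp
      then show "g u = g s" using e2[rule_format, of u] gs by simp
    qed
    moreover have "e/2 > 0" using e1 by simp
    ultimately show "s \<in> Cg g" unfolding Cg_iff by blast
  qed
  have "\<forall>s\<in>{t-e/2<..<t+e/2}. g s = g t"
  proof
    fix s assume "s \<in> {t-e/2<..<t+e/2}"
    then show "g s = g t" using e2[rule_format, of s] e1 by simp
  qed
  moreover have "e/2 > 0" using e1 by simp
  ultimately show ?thesis using sub by blast
qed

lemma const_Cg:
  assumes "\<And>s. x < s \<Longrightarrow> s < y \<Longrightarrow> g s = c"
  shows "{x<..<y} \<subseteq> Cg g"
proof
  fix t assume t: "t \<in> {x<..<y}"
  define e where "e = min (t - x) (y - t)"
  have "e > 0" using t by (auto simp: e_def)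
  moreover have "\<forall>s. t - e < s \<and> s < t + e \<longrightarrow> g s = g t"
    using t assms by (auto simp: e_def)
  ultimately show "t \<in> Cg g" using Cg_iff by blast
qed

lemma Cg_const_interval:
  assumes xy: "x \<le> y" and sub: "{x..y} \<subseteq> Cg g"
  shows "g y = g x"
proof -
  define S where "S = {z\<in>{x..y}. g z = g x}"
  define m where "m = Sup S"
  have xS: "x \<in> S" using xy by (auto simp: S_def)
  have bdd: "bdd_above S" by (rule bdd_aboveI[of _ y]) (auto simp: S_def)
  have xm: "x \<le> m" unfolding m_def using xS bdd by (rule cSup_upper)
  have my: "m \<le> y" unfolding m_def using xS by (intro cSup_least) (auto simp: S_def)
  then have "m \<in> Cg g" using sub xm by auto
  then obtain e where e: "e > 0" "\<And>s. m - e < s \<and> s < m + e \<Longrightarrow> g s = g m"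
    using Cg_iff by blast
  obtain z where z: "z \<in> S" "m - e < z"
    using less_cSup_iff[of S "m - e"] xS bdd e(1) unfolding m_def by auto
  have "z \<le> m" unfolding m_def using z(1) bdd by (rule cSup_upper)
  then have gm: "g m = g x" using e(2)[of z] z e(1) by (auto simp: S_def)
  show ?thesis
  proof (cases "m < y")
    case True
    define z' where "z' = min y (m + e/2)"
    have "m < z'" "z' < m + e" "z' \<le> y" using True e(1) by (auto simp: z'_def)
    then have "g z' = g m" using e(2)[of z'] e(1) by auto
    then have "z' \<in> S" using \<open>m < z'\<close> \<open>z' \<le> y\<close> gm xm unfolding S_def by auto
    then have "z' \<le> m" unfolding m_def using bdd by (rule cSup_upper)
    then show ?thesis using True e(1) by (auto simp: z'_def)
  next
    case False
    then show ?thesis using my gm by auto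
  qed
qed

lemma Cg_gjump: "t \<in> Cg g \<Longrightarrow> gjump g t = 0"
proof -
  assume "t \<in> Cg g"
  then obtain e where e: "e > 0" "\<And>s. t - e < s \<and> s < t + e \<Longrightarrow> g s = g t"
    using Cg_iff by blast
  have "gp t \<le> g (t + e/2)" using e(1) by (intro gp_le) auto
  also have "\<dots> = g t" using e(2)[of "t + e/2"] e(1) by simp
  finally show ?thesis using gp_ge[of t] gjump_eq by simp
qed

lemma Dg_not_Cg: "t \<in> Dg g \<Longrightarrow> t \<notin> Cg g"
  using Cg_gjump unfolding Dg_def by force

lemma Dg_iff: "t \<in> Dg g \<longleftrightarrow> gjump g t \<noteq> 0"
  using gjump_nonneg unfolding Dg_def by (simp add: less_le)

end


context gsetup
begin

lemma left_const:
  assumes "x < y" "\<And>s. x < s \<Longrightarrow> s < y \<Longrightarrow> g s = c"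
  shows "g y = c"
proof -
  have ev: "eventually (\<lambda>s. g s = c) (at_left y)"
    unfolding eventually_at_left_field using assms by blast
  have "(g \<longlongrightarrow> c) (at_left y)" by (rule tendsto_eventually[OF ev])
  moreover have "(g \<longlongrightarrow> g y) (at_left y)" by (rule leftcont)
  ultimately show ?thesis using tendsto_unique trivial_limit_at_left_real by blast
qed

lemma comp_interval: "is_interval (connected_component_set (Cg g) m)"
  using is_interval_connected_1 connected_connected_component by blast

lemma Ng_minus_intro:
  assumes xy: "x < y" and sub: "{x<..<y} \<subseteq> Cg g" and x: "x \<notin> Cg g"
  shows "x \<in> {Inf C | C. C \<in> components (Cg g) \<and> bdd_below C}"
proof -
  define m where "m = (x + y) / 2"
  have m: "m \<in> {x<..<y}" using xy by (auto simp: m_def)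
  define C where "C = connected_component_set (Cg g) m"
  have subC: "{x<..<y} \<subseteq> C" unfolding C_def
    by (rule connected_component_maximal[OF m _ sub]) simp
  have CCg: "C \<subseteq> Cg g" unfolding C_def by (rule connected_component_subset)
  have xC: "x \<notin> C" using x CCg by blast
  have mC: "m \<in> C" using m subC by blast
  have int: "\<And>u v w. u \<in> C \<Longrightarrow> w \<in> C \<Longrightarrow> u \<le> v \<Longrightarrow> v \<le> w \<Longrightarrow> v \<in> C"
    using comp_interval[of m] unfolding is_interval_1 C_def by blast
  have gt: "\<And>c. c \<in> C \<Longrightarrow> x < c"
  proof (rule ccontr)
    fix c assume c: "c \<in> C" "\<not> x < c"
    then have "x \<in> C" using int[OF c(1) mC, of x] m by auto
    then show False using xC by simp
  qed
  have bdd: "bdd_below C" by (rule bdd_belowI[of _ x]) (auto dest: gt)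
  have ne: "C \<noteq> {}" using mC by blast
  have le1: "x \<le> Inf C" using ne by (rule cInf_greatest) (auto dest: gt)
  have le2: "Inf C \<le> x"
  proof (rule ccontr)
    assume "\<not> Inf C \<le> x"
    define z where "z = (x + min (Inf C) y) / 2"
    have "z \<in> {x<..<y}" using \<open>\<not> Inf C \<le> x\<close> xy by (auto simp: z_def)
    then have "z \<in> C" using subC by blast
    then have "Inf C \<le> z" using bdd by (rule cInf_lower)
    then show False using \<open>\<not> Inf C \<le> x\<close> xy by (auto simp: z_def)
  qed
  have "C \<in> components (Cg g)" unfolding C_def using m sub by (intro componentsI) blast
  then show ?thesis using le1 le2 bdd by (intro CollectI exI[of _ C]) auto
qed

lemma Ng_plus_intro:
  assumes xy: "x < y" and sub: "{x<..<y} \<subseteq> Cg g" and y: "y \<notin> Cg g"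
  shows "y \<in> {Sup C | C. C \<in> components (Cg g) \<and> bdd_above C}"
proof -
  define m where "m = (x + y) / 2"
  have m: "m \<in> {x<..<y}" using xy by (auto simp: m_def)
  define C where "C = connected_component_set (Cg g) m"
  have subC: "{x<..<y} \<subseteq> C" unfolding C_def
    by (rule connected_component_maximal[OF m _ sub]) simp
  have CCg: "C \<subseteq> Cg g" unfolding C_def by (rule connected_component_subset)
  have yC: "y \<notin> C" using y CCg by blast
  have mC: "m \<in> C" using m subC by blast
  have int: "\<And>u v w. u \<in> C \<Longrightarrow> w \<in> C \<Longrightarrow> u \<le> v \<Longrightarrow> v \<le> w \<Longrightarrow> v \<in> C"
    using comp_interval[of m] unfolding is_interval_1 C_def by blast
  have lt: "\<And>c. c \<in> C \<Longrightarrow> c < y"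
  proof (rule ccontr)
    fix c assume c: "c \<in> C" "\<not> c < y"
    then have "y \<in> C" using int[OF mC c(1), of y] m by auto
    then show False using yC by simp
  qed
  have bdd: "bdd_above C" by (rule bdd_aboveI[of _ y]) (auto dest: lt)
  have ne: "C \<noteq> {}" using mC by blast
  have le1: "Sup C \<le> y" using ne by (rule cSup_least) (auto dest: lt)
  have le2: "y \<le> Sup C"
  proof (rule ccontr)
    assume "\<not> y \<le> Sup C"
    define z where "z = (y + max (Sup C) x) / 2"
    have "z \<in> {x<..<y}" using \<open>\<not> y \<le> Sup C\<close> xy by (auto simp: z_def)
    then have "z \<in> C" using subC by blast
    then have "z \<le> Sup C" using bdd by (rule cSup_upper)
    then show False using \<open>\<not> y \<le> Sup C\<close> xy by (auto simp: z_def)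
  qed
  have "C \<in> components (Cg g)" unfolding C_def using m sub by (intro componentsI) blast
  then show ?thesis using le1 le2 bdd by (intro CollectI exI[of _ C]) auto
qed

lemma a_not_left:
  assumes "a < y" "\<And>s. a < s \<Longrightarrow> s < y \<Longrightarrow> g s = c" "a \<notin> Cg g"
  shows False
proof -
  have "{a<..<y} \<subseteq> Cg g" using assms(2) by (rule const_Cg)
  then have "a \<in> {Inf C | C. C \<in> components (Cg g) \<and> bdd_below C}"
    by (rule Ng_minus_intro[OF assms(1) _ assms(3)])
  then show False using a_ok unfolding Ng_minus_def by blast
qed

lemma b_not_right:
  assumes "x < b" "\<And>s. x < s \<Longrightarrow> s < b \<Longrightarrow> g s = c"
  shows False
proof -
  have "{x<..<b} \<subseteq> Cg g" using assms(2) by (rule const_Cg)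
  then have "b \<in> {Sup C | C. C \<in> components (Cg g) \<and> bdd_above C}"
    using assms(1) b_ok by (intro Ng_plus_intro) auto
  then show False using b_ok unfolding Ng_plus_def by blast
qed

lemma tstar_notC: "t \<notin> Cg g \<Longrightarrow> tstar g t = t"
  unfolding tstar_def by simp

lemma tstar_C:
  assumes tC: "t \<in> Cg g" and ta: "a \<le> t" and tb: "t \<le> b"
  shows "t < tstar g t \<and> tstar g t < b \<and> g (tstar g t) = g t \<and> (\<forall>x. tstar g t < x \<longrightarrow> g t < g x)"
proof -
  define C where "C = connected_component_set (Cg g) t"
  define \<beta> where "\<beta> = Sup C"
  have ts: "tstar g t = \<beta>" unfolding tstar_def \<beta>_def C_def using tC by simp
  have CCg: "C \<subseteq> Cg g" unfolding C_def by (rule connected_component_subset)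
  have tCC: "t \<in> C" unfolding C_def using tC by simp
  have int: "\<And>u v w. u \<in> C \<Longrightarrow> w \<in> C \<Longrightarrow> u \<le> v \<Longrightarrow> v \<le> w \<Longrightarrow> v \<in> C"
    using comp_interval[of t] unfolding is_interval_1 C_def by blast
  have bC: "b \<notin> C" using b_ok CCg by blast
  have lt: "\<And>c. c \<in> C \<Longrightarrow> c < b"
  proof (rule ccontr)
    fix c assume c: "c \<in> C" "\<not> c < b"
    then have "b \<in> C" using int[OF tCC c(1), of b] tb by auto
    then show False using bC by simp
  qed
  have bdd: "bdd_above C" by (rule bdd_aboveI[of _ b]) (auto dest: lt)
  have ne: "C \<noteq> {}" using tCC by blast
  have tle: "t \<le> \<beta>" unfolding \<beta>_def using tCC bdd by (rule cSup_upper)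
  have betab: "\<beta> \<le> b" unfolding \<beta>_def using ne by (rule cSup_least) (auto dest: lt less_imp_le)
  have below: "\<And>x. t \<le> x \<Longrightarrow> x < \<beta> \<Longrightarrow> x \<in> C"
  proof -
    fix x assume x: "t \<le> x" "x < \<beta>"
    then obtain c where c: "c \<in> C" "x < c" using less_cSup_iff[OF ne bdd] unfolding \<beta>_def by blast
    show "x \<in> C" using int[OF tCC c(1), of x] x c by auto
  qed
  have constC: "\<And>x. t \<le> x \<Longrightarrow> x < \<beta> \<Longrightarrow> g x = g t"
  proof -
    fix x assume x: "t \<le> x" "x < \<beta>"
    have "{t..x} \<subseteq> Cg g" using below x CCg by auto
    then show "g x = g t" by (rule Cg_const_interval[OF x(1)])
  qed
  have betaC: "\<beta> \<notin> Cg g"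
  proof
    assume "\<beta> \<in> Cg g"
    then obtain e where e: "e > 0" "{\<beta>-e<..<\<beta>+e} \<subseteq> Cg g"
      using Cg_nbhd by blast
    have "{t..\<beta>+e/2} \<subseteq> Cg g"
    proof
      fix x assume x: "x \<in> {t..\<beta>+e/2}"
      show "x \<in> Cg g"
      proof (cases "x < \<beta>")
        case True then show ?thesis using below x CCg by auto
      next
        case False then show ?thesis using e x by auto
      qed
    qed
    then have "{t..\<beta>+e/2} \<subseteq> C" unfolding C_def
      using tle e(1) by (intro connected_component_maximal) auto
    then have "\<beta> + e/2 \<in> C" using tle e(1) by auto
    then have "\<beta> + e/2 \<le> \<beta>" unfolding \<beta>_def using bdd by (rule cSup_upper)
    then show False using e(1) by simp
  qed
  have tlt: "t < \<beta>" using tle betaC tC by (cases "t = \<beta>") auto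
  have gbeta: "g \<beta> = g t" using tlt by (rule left_const) (meson constC less_imp_le)
  have betalt: "\<beta> < b"
  proof (rule ccontr)
    assume "\<not> \<beta> < b"
    then have "\<beta> = b" using betab by simp
    moreover have "C \<in> components (Cg g)" unfolding C_def using tC by (rule componentsI)
    ultimately have "b \<in> Ng_plus g" unfolding Ng_plus_def \<beta>_def using bdd b_ok by blast
    then show False using b_ok by blast
  qed
  have above: "\<forall>x. \<beta> < x \<longrightarrow> g t < g x"
  proof (intro allI impI)
    fix x assume x: "\<beta> < x"
    have ge: "g t \<le> g x" using monoD'[of \<beta> x] x gbeta by simp
    show "g t < g x"
    proof (rule ccontr)
      assume "\<not> g t < g x"
      then have eq: "g x = g t" using ge by simp
      have "\<And>s. t < s \<Longrightarrow> s < x \<Longrightarrow> g s = g t"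
      proof -
        fix s assume "t < s" "s < x"
        then have "g t \<le> g s" "g s \<le> g x" using monoD' by auto
        then show "g s = g t" using eq by simp
      qed
      then have "{t<..<x} \<subseteq> Cg g" by (rule const_Cg)
      then show False using betaC tlt x by auto
    qed
  qed
  show ?thesis using ts tlt betalt gbeta above by simp
qed

lemma tstar_props:
  assumes "a \<le> t" "t \<le> b"
  shows "t \<le> tstar g t \<and> tstar g t \<le> b \<and> g (tstar g t) = g t"
proof (cases "t \<in> Cg g")
  case True
  then show ?thesis using tstar_C[OF True assms] by (meson less_imp_le)
next
  case False
  then show ?thesis using tstar_notC[OF False] assms by simp
qed

end


context gsetup
begin

definition sig :: "real \<Rightarrow> real" where "sig t = Sup {s\<in>{a..b}. g s = g t}"

lemma sig_props:
  assumes t: "t \<in> {a..b}"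
  shows "t \<le> sig t \<and> sig t \<le> b \<and> g (sig t) = g t \<and> (\<forall>s\<in>{a..b}. g s = g t \<longrightarrow> s \<le> sig t)
         \<and> (\<forall>s\<in>{a..b}. sig t < s \<longrightarrow> g t < g s)"
proof -
  define L where "L = {s\<in>{a..b}. g s = g t}"
  have tL: "t \<in> L" using t by (simp add: L_def)
  have bdd: "bdd_above L" by (rule bdd_aboveI[of _ b]) (auto simp: L_def)
  have ne: "L \<noteq> {}" using tL by blast
  have up: "\<And>s. s \<in> L \<Longrightarrow> s \<le> sig t" unfolding sig_def L_def[symmetric] using bdd cSup_upper by blast
  have sb: "sig t \<le> b" unfolding sig_def L_def[symmetric] using ne by (rule cSup_least) (auto simp: L_def)
  have ts: "t \<le> sig t" using up tL by blast
  have mid: "\<And>x. t \<le> x \<Longrightarrow> x < sig t \<Longrightarrow> g x = g t"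
  proof -
    fix x assume x: "t \<le> x" "x < sig t"
    then obtain y where y: "y \<in> L" "x < y" using less_cSup_iff[OF ne bdd] unfolding sig_def L_def by blast
    have "g t \<le> g x" "g x \<le> g y" using x y monoD' by auto
    then show "g x = g t" using y by (simp add: L_def)
  qed
  have gs: "g (sig t) = g t"
  proof (cases "t = sig t")
    case True then show ?thesis by simp
  next
    case False
    then have "t < sig t" using ts by simp
    then show ?thesis by (rule left_const) (meson mid less_imp_le)
  qed
  have above: "\<forall>s\<in>{a..b}. sig t < s \<longrightarrow> g t < g s"
  proof (intro ballI impI)
    fix s assume s: "s \<in> {a..b}" "sig t < s"
    have "g t \<le> g s" using monoD'[of t s] s ts by simp
    moreover have "g s \<noteq> g t" using up[of s] s by (auto simp: L_def)
    ultimately show "g t < g s" by simp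
  qed
  show ?thesis using ts sb gs above up by (auto simp: L_def)
qed

definition gF :: "real \<Rightarrow> real filter" where
  "gF t = (if t \<in> Dg g \<union> Cg g then
      at (tstar g t) within {s \<in> {a..b}. tstar g t < s \<and> g s \<noteq> g (tstar g t)}
    else at t within {s \<in> {a..b}. g s \<noteq> g t})"

lemma has_gderiv_iff:
  "has_gderiv g a b u t L \<longleftrightarrow>
     ((\<lambda>s. (u s - u (tstar g t)) / of_real (g s - g (tstar g t))) \<longlongrightarrow> L) (gF t)"
proof (cases "t \<in> Dg g \<union> Cg g")
  case True then show ?thesis unfolding has_gderiv_def gF_def by simp
next
  case False
  then have "tstar g t = t" using tstar_notC by blast
  then show ?thesis using False unfolding has_gderiv_def gF_def by simp
qed

lemma jump_case:
  assumes t: "t \<in> {a..b}" and D: "t \<in> Dg g \<union> Cg g"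
  shows "a \<le> tstar g t \<and> tstar g t < b \<and> (\<forall>x. tstar g t < x \<longrightarrow> g (tstar g t) < g x)"
proof (cases "t \<in> Cg g")
  case True
  then show ?thesis using tstar_C[OF True] t by auto
next
  case False
  then have tD: "t \<in> Dg g" and ts: "tstar g t = t" using D tstar_notC by auto
  have "t \<noteq> b" using b_ok tD by blast
  moreover have "\<forall>x. t < x \<longrightarrow> g t < g x"
  proof (intro allI impI)
    fix x assume "t < x"
    then have "gjump g t \<le> g x - g t" by (rule gjump_le)
    moreover have "gjump g t > 0" using tD unfolding Dg_def by simp
    ultimately show "g t < g x" by simp
  qed
  ultimately show ?thesis using t ts by auto
qed

lemma gF_nonbot:
  assumes t: "t \<in> {a..b}"
  shows "gF t \<noteq> bot"
proof (cases "t \<in> Dg g \<union> Cg g")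
  case True
  define p where "p = tstar g t"
  have p: "a \<le> p" "p < b" "\<And>x. p < x \<Longrightarrow> g p < g x"
    using jump_case[OF t True] unfolding p_def by auto
  have "p islimpt {s \<in> {a..b}. p < s \<and> g s \<noteq> g p}"
    unfolding islimpt_approachable_real
  proof (intro allI impI)
    fix e :: real assume e: "e > 0"
    define x where "x = min b (p + e/2)"
    have "p < x" "x \<le> b" "\<bar>x - p\<bar> < e" using p e by (auto simp: x_def)
    moreover have "g x \<noteq> g p" using p(3)[of x] \<open>p < x\<close> by simp
    ultimately show "\<exists>x'\<in>{s \<in> {a..b}. p < s \<and> g s \<noteq> g p}. x' \<noteq> p \<and> \<bar>x' - p\<bar> < e"
      using p by (intro bexI[of _ x]) auto
  qed
  then have "\<not> trivial_limit (at p within {s \<in> {a..b}. p < s \<and> g s \<noteq> g p})"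
    using trivial_limit_within by blast
  moreover have "gF t = at p within {s \<in> {a..b}. p < s \<and> g s \<noteq> g p}"
    using True unfolding gF_def p_def by simp
  ultimately show ?thesis by (simp add: trivial_limit_def)
next
  case False
  have "t islimpt {s \<in> {a..b}. g s \<noteq> g t}"
    unfolding islimpt_approachable_real
  proof (intro allI impI)
    fix e :: real assume e: "e > 0"
    show "\<exists>x'\<in>{s \<in> {a..b}. g s \<noteq> g t}. x' \<noteq> t \<and> \<bar>x' - t\<bar> < e"
    proof (rule ccontr)
      assume "\<not> ?thesis"
      then have H: "\<And>x. x \<in> {a..b} \<Longrightarrow> x \<noteq> t \<Longrightarrow> \<bar>x - t\<bar> < e \<Longrightarrow> g x = g t" by blast
      consider "t = a" | "t = b" | "a < t \<and> t < b" using t by force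
      then show False
      proof cases
        case 1
        have "\<And>s. a < s \<Longrightarrow> s < min b (a + e) \<Longrightarrow> g s = g t"
          using H 1 by (intro H) auto
        moreover have "a < min b (a + e)" using ab e by simp
        ultimately show False using a_not_left False 1 by blast
      next
        case 2
        have "\<And>s. max a (b - e) < s \<Longrightarrow> s < b \<Longrightarrow> g s = g t"
          using H 2 by (intro H) auto
        moreover have "max a (b - e) < b" using ab e by simp
        ultimately show False using b_not_right by blast
      next
        case 3
        define d where "d = min e (min (t - a) (b - t))"
        have d: "d > 0" using 3 e by (simp add: d_def)
        have "\<forall>s. t - d < s \<and> s < t + d \<longrightarrow> g s = g t"
        proof (intro allI impI)
          fix s assume s: "t - d < s \<and> s < t + d"
          show "g s = g t"
          proof (cases "s = t")
            case False then show ?thesis using s by (intro H) (auto simp: d_def)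
          qed simp
        qed
        then have "t \<in> Cg g" unfolding Cg_iff using d by blast
        then show False using False by blast
      qed
    qed
  qed
  then have "\<not> trivial_limit (at t within {s \<in> {a..b}. g s \<noteq> g t})"
    using trivial_limit_within by blast
  moreover have "gF t = at t within {s \<in> {a..b}. g s \<noteq> g t}"
    using False unfolding gF_def by simp
  ultimately show ?thesis by (simp add: trivial_limit_def)
qed

lemma gF_ev: "eventually (\<lambda>s. s \<in> {a..b} \<and> g s \<noteq> g (tstar g t)) (gF t)"
proof (cases "t \<in> Dg g \<union> Cg g")
  case True then show ?thesis unfolding gF_def by (simp add: eventually_at_filter)
next
  case False
  then have "tstar g t = t" using tstar_notC by blast
  then show ?thesis using False unfolding gF_def by (simp add: eventually_at_filter)
qed

lemma gF_lim:
  assumes t: "t \<in> {a..b}"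
  shows "(g \<longlongrightarrow> g (tstar g t) + gjump g (tstar g t)) (gF t)"
proof (cases "t \<in> Dg g \<union> Cg g")
  case True
  define p where "p = tstar g t"
  have "(g \<longlongrightarrow> gp p) (at p within {p<..})" using right_lim by simp
  then have "(g \<longlongrightarrow> gp p) (at p within {s \<in> {a..b}. p < s \<and> g s \<noteq> g p})"
    by (rule tendsto_within_subset) auto
  moreover have "gp p = g p + gjump g p" using gjump_eq by simp
  ultimately show ?thesis using True unfolding gF_def p_def by simp
next
  case False
  have ts: "tstar g t = t" using tstar_notC False by blast
  have j: "gjump g t = 0" using False Dg_iff by blast
  have "(g \<longlongrightarrow> g t) (at_right t)" using right_lim[of t] gjump_eq[of t] j by simp
  then have "(g \<longlongrightarrow> g t) (at t)" using leftcont filterlim_at_split by blast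
  then have "(g \<longlongrightarrow> g t) (at t within {s \<in> {a..b}. g s \<noteq> g t})"
    by (rule tendsto_within_subset) auto
  then show ?thesis using False ts j unfolding gF_def by simp
qed

lemma gderiv_eq:
  assumes t: "t \<in> {a..b}" and d: "has_gderiv g a b u t L"
  shows "gderiv g a b u t = L"
proof -
  have "has_gderiv g a b u t (gderiv g a b u t)" unfolding gderiv_def using d by (rule someI)
  then show ?thesis using d gF_nonbot[OF t] unfolding has_gderiv_iff
    using tendsto_unique by blast
qed

lemma gderiv_has:
  assumes "g_differentiable g a b u t"
  shows "has_gderiv g a b u t (gderiv g a b u t)"
  using assms unfolding g_differentiable_def gderiv_def by (metis someI)

lemma prod_rule:
  fixes u v :: "real \<Rightarrow> 'a::real_normed_field"
  assumes t: "t \<in> {a..b}" and du: "has_gderiv g a b u t Lu" and dv: "has_gderiv g a b v t Lv"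
  shows "has_gderiv g a b (\<lambda>s. u s * v s) t
     (Lu * v (tstar g t) + u (tstar g t) * Lv + Lu * Lv * of_real (gjump g (tstar g t)))"
proof -
  define p where "p = tstar g t"
  define D where "D = (\<lambda>s. (of_real (g s - g p) :: 'a))"
  define Qu where "Qu = (\<lambda>s. (u s - u p) / D s)"
  define Qv where "Qv = (\<lambda>s. (v s - v p) / D s)"
  have Qu: "(Qu \<longlongrightarrow> Lu) (gF t)" using du unfolding has_gderiv_iff Qu_def D_def p_def .
  have Qv: "(Qv \<longlongrightarrow> Lv) (gF t)" using dv unfolding has_gderiv_iff Qv_def D_def p_def .
  have ev: "eventually (\<lambda>s. D s \<noteq> 0) (gF t)"
    using gF_ev[of t] by eventually_elim (simp add: D_def p_def)
  have Dl: "(D \<longlongrightarrow> of_real (gjump g p)) (gF t)"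
  proof -
    have "((\<lambda>s. g s - g p) \<longlongrightarrow> (g p + gjump g p) - g p) (gF t)"
      using gF_lim[OF t] unfolding p_def by (intro tendsto_intros)
    then show ?thesis unfolding D_def by (intro tendsto_intros) simp
  qed
  have vl: "(v \<longlongrightarrow> v p + Lv * of_real (gjump g p)) (gF t)"
  proof -
    have "((\<lambda>s. v p + Qv s * D s) \<longlongrightarrow> v p + Lv * of_real (gjump g p)) (gF t)"
      using Qv Dl by (intro tendsto_intros)
    moreover have "eventually (\<lambda>s. v p + Qv s * D s = v s) (gF t)"
      using ev by eventually_elim (simp add: Qv_def)
    ultimately show ?thesis by (rule Lim_transform_eventually)
  qed
  have "((\<lambda>s. Qu s * v s + u p * Qv s) \<longlongrightarrow> Lu * (v p + Lv * of_real (gjump g p)) + u p * Lv) (gF t)"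
    using Qu vl Qv by (intro tendsto_intros)
  moreover have "eventually (\<lambda>s. Qu s * v s + u p * Qv s = (u s * v s - u p * v p) / D s) (gF t)"
    using ev by eventually_elim (simp add: Qu_def Qv_def field_simps)
  ultimately have "((\<lambda>s. (u s * v s - u p * v p) / D s) \<longlongrightarrow> Lu * (v p + Lv * of_real (gjump g p)) + u p * Lv) (gF t)"
    by (rule Lim_transform_eventually)
  then show ?thesis unfolding has_gderiv_iff D_def p_def[symmetric]
    by (simp add: algebra_simps)
qed

end


context gsetup
begin

lemma BCg_level:
  assumes "BCg g a b u" "s \<in> {a..b}" "t \<in> {a..b}" "g s = g t"
  shows "u s = u t"
proof -
  have gc: "g_continuous_at g a b u t" using assms(1,3) unfolding BCg_def by blast
  have "\<forall>e>0. norm (u t - u s) < e"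
  proof (intro allI impI)
    fix e :: real assume "e > 0"
    then obtain d where d: "d > 0" "\<forall>s\<in>{a..b}. \<bar>g t - g s\<bar> < d \<longrightarrow> norm (u t - u s) < e"
      using gc unfolding g_continuous_at_def by blast
    then show "norm (u t - u s) < e" using assms(2,4) by auto
  qed
  then have "norm (u t - u s) = 0"
    by (metis norm_ge_zero order_less_irrefl order_le_less)
  then show ?thesis by simp
qed

lemma bounded_img_iff: "bounded (u ` {a..b}) \<longleftrightarrow> (\<exists>M. \<forall>t\<in>{a..b}. norm (u t) \<le> M)"
  unfolding bounded_iff by auto

lemma bound_pos:
  assumes "BCg g a b u"
  obtains M where "M > 0" "\<And>t. t \<in> {a..b} \<Longrightarrow> norm (u t) \<le> M"
proof -
  obtain M where "\<forall>t\<in>{a..b}. norm (u t) \<le> M" using assms unfolding BCg_def bounded_img_iff by blast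
  then have "\<And>t. t \<in> {a..b} \<Longrightarrow> norm (u t) \<le> max M 1" by (meson max.coboundedI1)
  then show ?thesis using that[of "max M 1"] by simp
qed

lemma gcont_add:
  fixes u v :: "real \<Rightarrow> 'b::real_normed_vector"
  assumes "g_continuous_at g a b u t" "g_continuous_at g a b v t"
  shows "g_continuous_at g a b (\<lambda>s. u s + v s) t"
  unfolding g_continuous_at_def
proof (intro allI impI)
  fix e :: real assume e: "e > 0"
  obtain d1 where d1: "d1 > 0" "\<forall>s\<in>{a..b}. \<bar>g t - g s\<bar> < d1 \<longrightarrow> norm (u t - u s) < e/2"
    using assms(1) e unfolding g_continuous_at_def by (meson half_gt_zero)
  obtain d2 where d2: "d2 > 0" "\<forall>s\<in>{a..b}. \<bar>g t - g s\<bar> < d2 \<longrightarrow> norm (v t - v s) < e/2"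
    using assms(2) e unfolding g_continuous_at_def by (meson half_gt_zero)
  show "\<exists>d>0. \<forall>s\<in>{a..b}. \<bar>g t - g s\<bar> < d \<longrightarrow> norm (u t + v t - (u s + v s)) < e"
  proof (intro exI[of _ "min d1 d2"] conjI ballI impI)
    fix s assume s: "s \<in> {a..b}" "\<bar>g t - g s\<bar> < min d1 d2"
    have "norm (u t + v t - (u s + v s)) \<le> norm (u t - u s) + norm (v t - v s)"
      by (metis add_diff_add norm_triangle_ineq)
    also have "\<dots> < e" using d1 d2 s by force
    finally show "norm (u t + v t - (u s + v s)) < e" .
  qed (use d1 d2 in auto)
qed

lemma gcont_minus:
  fixes u :: "real \<Rightarrow> 'b::real_normed_vector"
  assumes "g_continuous_at g a b u t"
  shows "g_continuous_at g a b (\<lambda>s. - u s) t"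
  using assms unfolding g_continuous_at_def by (metis minus_diff_eq minus_diff_minus norm_minus_cancel)

lemma gcont_mult:
  fixes u v :: "real \<Rightarrow> 'b::real_normed_field"
  assumes "g_continuous_at g a b u t" "g_continuous_at g a b v t"
    and M: "M > 0" "\<And>s. s \<in> {a..b} \<Longrightarrow> norm (u s) \<le> M" "\<And>s. s \<in> {a..b} \<Longrightarrow> norm (v s) \<le> M"
    and t: "t \<in> {a..b}"
  shows "g_continuous_at g a b (\<lambda>s. u s * v s) t"
  unfolding g_continuous_at_def
proof (intro allI impI)
  fix e :: real assume e: "e > 0"
  define e' where "e' = e / (2 * M)"
  have e': "e' > 0" using e M by (simp add: e'_def)
  obtain d1 where d1: "d1 > 0" "\<forall>s\<in>{a..b}. \<bar>g t - g s\<bar> < d1 \<longrightarrow> norm (u t - u s) < e'"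
    using assms(1) e' unfolding g_continuous_at_def by blast
  obtain d2 where d2: "d2 > 0" "\<forall>s\<in>{a..b}. \<bar>g t - g s\<bar> < d2 \<longrightarrow> norm (v t - v s) < e'"
    using assms(2) e' unfolding g_continuous_at_def by blast
  show "\<exists>d>0. \<forall>s\<in>{a..b}. \<bar>g t - g s\<bar> < d \<longrightarrow> norm (u t * v t - u s * v s) < e"
  proof (intro exI[of _ "min d1 d2"] conjI ballI impI)
    fix s assume s: "s \<in> {a..b}" "\<bar>g t - g s\<bar> < min d1 d2"
    have n1: "norm (u t - u s) < e'" "norm (v t - v s) < e'" using d1 d2 s by auto
    have "u t * v t - u s * v s = u t * (v t - v s) + (u t - u s) * v s" by (simp add: algebra_simps)
    then have "norm (u t * v t - u s * v s) \<le> norm (u t) * norm (v t - v s) + norm (u t - u s) * norm (v s)"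
      by (metis norm_mult norm_triangle_ineq)
    show "norm (u t * v t - u s * v s) < e"
    proof -
      have "norm (u t) * norm (v t - v s) \<le> M * norm (v t - v s)"
        using M(2)[OF t] by (simp add: mult_right_mono)
      also have "\<dots> < M * e'" using n1(2) M(1) by simp
      finally have A: "norm (u t) * norm (v t - v s) < M * e'" .
      have "norm (u t - u s) * norm (v s) \<le> e' * M"
        using n1(1) M(3)[OF s(1)] e' by (intro mult_mono) auto
      then have "norm (u t) * norm (v t - v s) + norm (u t - u s) * norm (v s) < e"
        using A M by (simp add: e'_def)
      then show ?thesis
        using \<open>u t * v t - u s * v s = _\<close> by (metis norm_mult norm_triangle_ineq order_le_less_trans)
    qed
  qed (use d1 d2 in auto)
qed

lemma BCg_cong:
  assumes "\<And>t. t \<in> {a..b} \<Longrightarrow> u t = v t"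
  shows "BCg g a b u \<longleftrightarrow> BCg g a b v"
proof -
  have "u ` {a..b} = v ` {a..b}" using assms by auto
  moreover have "\<And>t. t \<in> {a..b} \<Longrightarrow> g_continuous_at g a b u t \<longleftrightarrow> g_continuous_at g a b v t"
    unfolding g_continuous_at_def using assms by (metis (no_types, lifting))
  ultimately show ?thesis unfolding BCg_def by auto
qed

lemma BCg_add:
  fixes u v :: "real \<Rightarrow> 'b::real_normed_vector"
  assumes "BCg g a b u" "BCg g a b v"
  shows "BCg g a b (\<lambda>s. u s + v s)"
proof -
  obtain M1 where "\<forall>t\<in>{a..b}. norm (u t) \<le> M1" using assms(1) unfolding BCg_def bounded_img_iff by blast
  moreover obtain M2 where "\<forall>t\<in>{a..b}. norm (v t) \<le> M2" using assms(2) unfolding BCg_def bounded_img_iff by blast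
  ultimately have "\<forall>t\<in>{a..b}. norm (u t + v t) \<le> M1 + M2" by (meson add_mono norm_triangle_le)
  then show ?thesis using assms unfolding BCg_def bounded_img_iff by (auto intro: gcont_add)
qed

lemma BCg_minus:
  fixes u :: "real \<Rightarrow> 'b::real_normed_vector"
  assumes "BCg g a b u"
  shows "BCg g a b (\<lambda>s. - u s)"
  using assms unfolding BCg_def bounded_img_iff by (auto intro: gcont_minus)

lemma BCg_mult:
  fixes u v :: "real \<Rightarrow> 'b::real_normed_field"
  assumes "BCg g a b u" "BCg g a b v"
  shows "BCg g a b (\<lambda>s. u s * v s)"
proof -
  obtain M1 where M1: "M1 > 0" "\<And>t. t \<in> {a..b} \<Longrightarrow> norm (u t) \<le> M1" using bound_pos[OF assms(1)] by blast
  obtain M2 where M2: "M2 > 0" "\<And>t. t \<in> {a..b} \<Longrightarrow> norm (v t) \<le> M2" using bound_pos[OF assms(2)] by blast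
  define M where "M = max M1 M2"
  have M: "M > 0" "\<And>t. t \<in> {a..b} \<Longrightarrow> norm (u t) \<le> M" "\<And>t. t \<in> {a..b} \<Longrightarrow> norm (v t) \<le> M"
    using M1 M2 unfolding M_def by (auto intro: max.coboundedI1 max.coboundedI2)
  have "\<forall>t\<in>{a..b}. norm (u t * v t) \<le> M * M"
    using M by (auto simp: norm_mult intro!: mult_mono)
  moreover have "\<forall>t\<in>{a..b}. g_continuous_at g a b (\<lambda>s. u s * v s) t"
    using assms M unfolding BCg_def by (auto intro!: gcont_mult[where M=M])
  ultimately show ?thesis unfolding BCg_def bounded_img_iff by blast
qed

end


context gsetup
begin

definition J :: "real \<Rightarrow> real" where "J t = gjump g (tstar g t)"
definition LA :: "real \<Rightarrow> bool" where "LA t \<longleftrightarrow> (\<forall>\<delta>>0. \<exists>s\<in>{a..b}. g t - \<delta> < g s \<and> g s < g t)"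

lemma J_nonneg: "J t \<ge> 0"
  unfolding J_def by (rule gjump_nonneg)

lemma J_le:
  assumes s: "s \<in> {a..b}" and lt: "g s < g y"
  shows "J s \<le> g y - g s"
proof -
  have p: "g (tstar g s) = g s" using tstar_props[of s] s by auto
  have "tstar g s < y"
  proof (rule ccontr)
    assume "\<not> tstar g s < y"
    then have "g y \<le> g (tstar g s)" using monoD' by simp
    then show False using p lt by simp
  qed
  then have "gjump g (tstar g s) \<le> g y - g (tstar g s)" by (rule gjump_le)
  then show ?thesis using p unfolding J_def by simp
qed

lemma J_bound:
  assumes t: "t \<in> {a..b}"
  shows "J t \<le> g b - g a"
proof -
  have p: "t \<le> tstar g t" "tstar g t \<le> b" "g (tstar g t) = g t" using tstar_props[of t] t by auto
  have ga: "g a \<le> g t" using t monoD' by simp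
  show ?thesis
  proof (cases "tstar g t < b")
    case True
    then have "gjump g (tstar g t) \<le> g b - g (tstar g t)" by (rule gjump_le)
    then show ?thesis using p ga unfolding J_def by simp
  next
    case False
    then have pb: "tstar g t = b" using p by simp
    have "t \<notin> Cg g"
    proof
      assume "t \<in> Cg g"
      moreover have "a \<le> t" "t \<le> b" using t by auto
      ultimately have "tstar g t < b" using tstar_C[of t] by blast
      then show False using pb by simp
    qed
    then have "tstar g t = t" by (rule tstar_notC)
    have bD: "b \<notin> Dg g" using b_ok by blast
    have "gjump g b = 0" using Dg_iff[of b] bD by simp
    then have "gjump g (tstar g t) = 0" using pb by simp
    then show ?thesis unfolding J_def using monoD'[of a b] ab by simp
  qed
qed

lemma sig_level: "g s = g t \<Longrightarrow> sig s = sig t"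
  unfolding sig_def by simp

lemma LA_level: "g s = g t \<Longrightarrow> LA s = LA t"
  unfolding LA_def by simp

lemma J_le_sig:
  assumes s: "s \<in> {a..b}"
  shows "J s \<le> gjump g (sig s)"
proof -
  define p where "p = tstar g s"
  have p: "s \<le> p" "p \<le> b" "g p = g s" using tstar_props[of s] s unfolding p_def by auto
  have pab: "p \<in> {a..b}" using p s by auto
  have ps: "p \<le> sig s" using sig_props[OF s] pab p(3) by blast
  have gsig: "g (sig s) = g s" using sig_props[OF s] by blast
  show ?thesis
  proof (cases "p = sig s")
    case True then show ?thesis unfolding J_def p_def[symmetric] by simp
  next
    case False
    then have "p < sig s" using ps by simp
    then have "gjump g p \<le> g (sig s) - g p" by (rule gjump_le)
    then show ?thesis unfolding J_def p_def[symmetric] using gsig p(3) gjump_nonneg[of "sig s"] by simp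
  qed
qed

lemma lev_J:
  assumes s: "s \<in> {a..b}"
  shows "J s = gjump g (sig s) \<or> LA s"
proof -
  define p where "p = tstar g s"
  define \<sigma> where "\<sigma> = sig s"
  have p: "s \<le> p" "p \<le> b" "g p = g s" using tstar_props[of s] s unfolding p_def by auto
  have pab: "p \<in> {a..b}" using p s by auto
  have ps: "p \<le> \<sigma>" using sig_props[OF s] pab p(3) unfolding \<sigma>_def by blast
  have gsig: "g \<sigma> = g s" "\<sigma> \<le> b" "s \<le> \<sigma>" using sig_props[OF s] unfolding \<sigma>_def by auto
  show ?thesis
  proof (cases "p = \<sigma>")
    case True then show ?thesis unfolding J_def p_def[symmetric] \<sigma>_def by simp
  next
    case False
    then have plt: "p < \<sigma>" using ps by simp
    have sC: "s \<notin> Cg g"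
    proof
      assume "s \<in> Cg g"
      then have "\<forall>x. p < x \<longrightarrow> g s < g x" using tstar_C[of s] s unfolding p_def by auto
      then show False using plt gsig(1) by auto
    qed
    then have ps': "p = s" using tstar_notC unfolding p_def by simp
    have squeeze: "\<And>x. s \<le> x \<Longrightarrow> x \<le> \<sigma> \<Longrightarrow> g x = g s"
    proof -
      fix x assume "s \<le> x" "x \<le> \<sigma>"
      then have "g s \<le> g x" "g x \<le> g \<sigma>" using monoD' by auto
      then show "g x = g s" using gsig(1) by simp
    qed
    have sa: "a < s"
    proof (rule ccontr)
      assume "\<not> a < s"
      then have "s = a" using s by simp
      have "\<And>x. a < x \<Longrightarrow> x < \<sigma> \<Longrightarrow> g x = g s"
        using squeeze \<open>s = a\<close> by (meson less_imp_le)
      moreover have "a < \<sigma>" using plt ps' \<open>s = a\<close> by simp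
      ultimately show False using a_not_left sC \<open>s = a\<close> by blast
    qed
    have "LA s" unfolding LA_def
    proof (intro allI impI)
      fix d :: real assume d: "d > 0"
      obtain r where r: "a < r" "r < s" "g r > g s - d" using left_approx[OF d sa] by blast
      have "g r \<le> g s" using r monoD' by simp
      moreover have "g r \<noteq> g s"
      proof
        assume eq: "g r = g s"
        have "\<And>x. r < x \<Longrightarrow> x < \<sigma> \<Longrightarrow> g x = g s"
        proof -
          fix x assume x: "r < x" "x < \<sigma>"
          then have "g r \<le> g x" "g x \<le> g \<sigma>" using monoD' by auto
          then show "g x = g s" using eq gsig(1) by simp
        qed
        then have "{r<..<\<sigma>} \<subseteq> Cg g" by (rule const_Cg)
        then show False using sC r plt ps' by auto
      qed
      ultimately show "\<exists>x\<in>{a..b}. g s - d < g x \<and> g x < g s"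
        using r s by (intro bexI[of _ r]) auto
    qed
    then show ?thesis by simp
  qed
qed

lemma Ag_iff: "t \<in> Ag g a b \<longleftrightarrow> gjump g (sig t) > 0"
  unfolding Ag_def sig_def Dg_def by simp

lemma bad_iff:
  assumes t: "t \<in> {a..b}"
  shows "t \<in> ({tstar g a<..<b} \<inter> Ag g a b) - Hg g \<longleftrightarrow> gjump g (sig t) > 0 \<and> LA t"
proof
  assume H: "t \<in> ({tstar g a<..<b} \<inter> Ag g a b) - Hg g"
  then have j: "gjump g (sig t) > 0" and ta: "tstar g a < t" and tb: "t < b" and nH: "t \<notin> Hg g"
    using Ag_iff by auto
  have sg: "t \<le> sig t" "sig t \<le> b" "g (sig t) = g t" using sig_props[OF t] by auto
  have "LA t"
  proof (rule ccontr)
    assume "\<not> LA t"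
    then obtain d0 where d0: "d0 > 0" "\<And>s. s \<in> {a..b} \<Longrightarrow> \<not> (g t - d0 < g s \<and> g s < g t)"
      unfolding LA_def by blast
    define L where "L = {s\<in>{a..b}. g s = g t}"
    define c where "c = Inf L"
    have tL: "t \<in> L" using t by (simp add: L_def)
    have bdd: "bdd_below L" by (rule bdd_belowI[of _ a]) (auto simp: L_def)
    have ne: "L \<noteq> {}" using tL by blast
    have ct: "c \<le> t" unfolding c_def using tL bdd by (rule cInf_lower)
    have ac: "a \<le> c" unfolding c_def using ne by (rule cInf_greatest) (auto simp: L_def)
    have lowL: "\<And>x. x \<in> L \<Longrightarrow> c \<le> x" unfolding c_def using bdd cInf_lower by blast
    show False
    proof (cases "g c = g t")
      case True
      show False
      proof (cases "a < c")
        case True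
        obtain r where r: "a < r" "r < c" "g r > g c - d0" using left_approx[OF d0(1) True] by blast
        have "g r \<le> g c" using r monoD' by simp
        moreover have "g r \<noteq> g t"
        proof
          assume "g r = g t"
          then have "r \<in> L" using r ct t by (auto simp: L_def)
          then show False using lowL[of r] r by simp
        qed
        ultimately show False using d0(2)[of r] r \<open>g c = g t\<close> ct t by auto
      next
        case False
        then have "c = a" using ac by simp
        then have gat: "g a = g t" using \<open>g c = g t\<close> by simp
        show False
        proof (cases "a \<in> Cg g")
          case True
          then have "\<forall>x. tstar g a < x \<longrightarrow> g a < g x" using tstar_C[OF True] ab by auto
          then show False using ta gat by auto
        next
          case False
          then have "tstar g a = a" using tstar_notC by simp
          then have at: "a < t" using ta by simp
          have "\<And>x. a < x \<Longrightarrow> x < t \<Longrightarrow> g x = g a"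
          proof -
            fix x assume "a < x" "x < t"
            then have "g a \<le> g x" "g x \<le> g t" using monoD' by auto
            then show "g x = g a" using gat by simp
          qed
          then show False using a_not_left[OF at] False by blast
        qed
      qed
    next
      case False
      have gc: "g c < g t" using False monoD'[OF ct] by simp
      then have clt: "c < t" using ct by (cases "c = t") auto
      have mid: "\<And>x. c < x \<Longrightarrow> x \<le> sig t \<Longrightarrow> g x = g t"
      proof -
        fix x assume x: "c < x" "x \<le> sig t"
        show "g x = g t"
        proof (cases "x \<le> t")
          case True
          obtain y where y: "y \<in> L" "y < x"
            using cInf_less_iff[OF ne bdd, of x] x(1) unfolding c_def by blast
          then have "g y \<le> g x" "g x \<le> g t" using monoD' True by auto
          then show ?thesis using y by (simp add: L_def)
        next
          case False
          then have "g t \<le> g x" "g x \<le> g (sig t)" using monoD' x by auto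
          then show ?thesis using sg(3) by simp
        qed
      qed
      have "gp c \<ge> g t" unfolding gp_def
      proof (rule cInf_greatest)
        show "g ` {c<..} \<noteq> {}" by (auto simp: gt_ex)
      next
        fix v assume "v \<in> g ` {c<..}"
        then obtain y where y: "c < y" "v = g y" by auto
        show "g t \<le> v"
        proof (cases "y \<le> t")
          case True then show ?thesis using mid[of y] y sg by simp
        next
          case False then show ?thesis using y monoD' by simp
        qed
      qed
      then have "gjump g c > 0" using gjump_eq gc by simp
      then have cD: "c \<in> Dg g" unfolding Dg_def by simp
      have sD: "sig t \<in> Dg g" using j unfolding Dg_def by simp
      have "\<And>x. c < x \<Longrightarrow> x < sig t \<Longrightarrow> g x = g t" using mid by (meson less_imp_le)
      then have "{c<..<sig t} \<subseteq> Cg g" by (rule const_Cg)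
      moreover have "t \<in> {c<..sig t}" using clt sg by simp
      ultimately have "t \<in> Hg g" unfolding Hg_def mem_Collect_eq
        by (intro exI[of _ c] exI[of _ "sig t"] conjI cD sD)
      then show False using nH by simp
    qed
  qed
  then show "gjump g (sig t) > 0 \<and> LA t" using j by simp
next
  assume B: "gjump g (sig t) > 0 \<and> LA t"
  have sg: "t \<le> sig t" "sig t \<le> b" "g (sig t) = g t" using sig_props[OF t] by auto
  have "sig t \<noteq> b" using B b_ok unfolding Dg_def by auto
  then have tb: "t < b" using sg by simp
  have noLA: "\<not> LA t" if eq: "g t = g a"
  proof -
    have "\<And>s. s \<in> {a..b} \<Longrightarrow> g a \<le> g s" using monoD' by simp
    show ?thesis
    proof
      assume "LA t"
      then obtain s where "s \<in> {a..b}" "g s < g t" unfolding LA_def using zero_less_one by blast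
      then show False using \<open>\<And>s. s \<in> {a..b} \<Longrightarrow> g a \<le> g s\<close> eq by force
    qed
  qed
  have ta: "tstar g a < t"
  proof (rule ccontr)
    assume "\<not> tstar g a < t"
    then have tle: "t \<le> tstar g a" by simp
    have "g t = g a"
    proof (cases "a \<in> Cg g")
      case True
      have "g (tstar g a) = g a" using tstar_C[OF True] ab by auto
      then show ?thesis using tle t monoD'[of a t] monoD'[of t "tstar g a"] by simp
    next
      case False
      then show ?thesis using tle t tstar_notC by simp
    qed
    then show False using noLA B by simp
  qed
  have nH: "t \<notin> Hg g"
  proof
    assume "t \<in> Hg g"
    then obtain s1 s2 where s0: "s1 \<in> Dg g" "s2 \<in> Dg g" "{s1<..<s2} \<subseteq> Cg g" "t \<in> {s1<..s2}"
      unfolding Hg_def mem_Collect_eq by blast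
    then have s: "s1 \<in> Dg g" "s2 \<in> Dg g" "{s1<..<s2} \<subseteq> Cg g" "s1 < t" "t \<le> s2" by auto
    define q where "q = (s1 + s2) / 2"
    have q: "s1 < q" "q < s2" using s by (auto simp: q_def)
    have cst: "\<And>x. s1 < x \<Longrightarrow> x < s2 \<Longrightarrow> g x = g q"
    proof -
      fix x assume x: "s1 < x" "x < s2"
      show "g x = g q"
      proof (cases "x \<le> q")
        case True
        have "{x..q} \<subseteq> Cg g" using s(3) x q True by auto
        then show ?thesis using Cg_const_interval[OF True] by simp
      next
        case False
        have "{q..x} \<subseteq> Cg g" using s(3) x q False by auto
        then show ?thesis using Cg_const_interval[of q x] False by simp
      qed
    qed
    have s12: "s1 < s2" using q by simp
    have gs2: "g s2 = g q" using s12 cst by (rule left_const)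
    have gt: "g t = g q"
    proof (cases "t = s2")
      case True then show ?thesis using gs2 by simp
    next
      case False
      then have "t < s2" using s(5) by simp
      then show ?thesis using cst[OF s(4)] by blast
    qed
    have j1: "gjump g s1 > 0" using s(1) unfolding Dg_def by simp
    obtain x where x: "x \<in> {a..b}" "g t - gjump g s1 < g x" "g x < g t"
      using B j1 unfolding LA_def by blast
    have xt: "x < t" using x monoD'[of t x] by (cases "x < t") auto
    have xs1: "x \<le> s1"
    proof (rule ccontr)
      assume "\<not> x \<le> s1"
      then have "s1 < x" by simp
      moreover have "x < s2" using xt s(5) by simp
      ultimately have "g x = g q" using cst by blast
      then show False using x gt by simp
    qed
    have "gjump g s1 \<le> g t - g s1" using s(4) by (rule gjump_le)
    moreover have "g x \<le> g s1" using xs1 monoD' by simp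
    ultimately show False using x by simp
  qed
  show "t \<in> ({tstar g a<..<b} \<inter> Ag g a b) - Hg g"
    using ta tb nH B Ag_iff by auto
qed

end


context gsetup
begin

lemma norm_Q: "norm (P * of_real (J s) :: 'b::real_normed_field) = norm P * J s"
  using J_nonneg[of s] by (simp add: norm_mult)

lemma necessity:
  fixes P :: "real \<Rightarrow> 'b::real_normed_field"
  assumes P: "BCg g a b P"
    and Q: "\<forall>t\<in>{a..b}. g_continuous_at g a b (\<lambda>s. P s * of_real (J s)) t"
    and t: "t \<in> {a..b}" and j: "gjump g (sig t) > 0" and la: "LA t"
  shows "P t = 0"
proof -
  define \<sigma> where "\<sigma> = sig t"
  have sg: "t \<le> \<sigma>" "\<sigma> \<le> b" "g \<sigma> = g t" using sig_props[OF t] unfolding \<sigma>_def by auto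
  have sab: "\<sigma> \<in> {a..b}" using sg t by auto
  have "\<sigma> \<in> Dg g" using j unfolding Dg_def \<sigma>_def by simp
  then have "\<sigma> \<notin> Cg g" by (rule Dg_not_Cg)
  then have "tstar g \<sigma> = \<sigma>" by (rule tstar_notC)
  then have Js: "J \<sigma> = gjump g \<sigma>" unfolding J_def by simp
  obtain M where M: "M > 0" "\<And>s. s \<in> {a..b} \<Longrightarrow> norm (P s) \<le> M"
    using bound_pos[OF P] by blast
  have Pst: "P \<sigma> = P t" using BCg_level[OF P sab t sg(3)] .
  show ?thesis
  proof (rule ccontr)
    assume "P t \<noteq> 0"
    then have nz: "norm (P \<sigma>) > 0" using Pst by simp
    define jj where "jj = gjump g \<sigma>"
    have jj: "jj > 0" using j unfolding jj_def \<sigma>_def .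
    define e where "e = norm (P \<sigma>) * jj / 2"
    have e: "e > 0" using nz jj by (simp add: e_def)
    obtain d where d: "d > 0"
      "\<forall>s\<in>{a..b}. \<bar>g \<sigma> - g s\<bar> < d \<longrightarrow> norm (P \<sigma> * of_real (J \<sigma>) - P s * of_real (J s)) < e"
      using Q sab e unfolding g_continuous_at_def by blast
    define d' where "d' = min d (e / M)"
    have d': "d' > 0" using d e M by (simp add: d'_def)
    obtain s where s: "s \<in> {a..b}" "g t - d' < g s" "g s < g t"
      using la d' unfolding LA_def by blast
    have "\<bar>g \<sigma> - g s\<bar> < d" using s sg(3) d'_def by auto
    then have A: "norm (P \<sigma> * of_real (J \<sigma>) - P s * of_real (J s)) < e" using d s by blast
    have "J s \<le> g t - g s" using J_le[OF s(1) s(3)] .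
    also have "\<dots> < e / M" using s d'_def by auto
    finally have Jl: "J s < e / M" .
    have "norm (P s * of_real (J s)) = norm (P s) * J s" by (rule norm_Q)
    also have "\<dots> \<le> M * J s" using M(2)[OF s(1)] J_nonneg[of s] by (simp add: mult_right_mono)
    also have "\<dots> < M * (e / M)" by (rule mult_strict_left_mono[OF Jl M(1)])
    also have "\<dots> = e" using M(1) by simp
    finally have B: "norm (P s * of_real (J s)) < e" .
    have "norm (P \<sigma> * of_real (J \<sigma>)) \<le> norm (P \<sigma> * of_real (J \<sigma>) - P s * of_real (J s)) + norm (P s * of_real (J s))"
      using norm_triangle_ineq[of "P \<sigma> * of_real (J \<sigma>) - P s * of_real (J s)" "P s * of_real (J s)"] by simp
    also have "\<dots> < 2 * e" using A B by simp
    finally have C: "norm (P \<sigma> * of_real (J \<sigma>)) < 2 * e" .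
    have "norm (P \<sigma> * of_real (J \<sigma>)) = norm (P \<sigma>) * J \<sigma>" by (rule norm_Q)
    then have "norm (P \<sigma> * of_real (J \<sigma>)) = norm (P \<sigma>) * jj" using Js jj_def by simp
    then show False using C by (simp add: e_def)
  qed
qed

lemma right_small:
  assumes t: "t \<in> {a..b}" and j0: "gjump g (sig t) = 0" and eta: "\<eta> > 0"
  shows "\<exists>d>0. \<forall>s\<in>{a..b}. g t < g s \<and> g s < g t + d \<longrightarrow> J s < \<eta>"
proof -
  define \<sigma> where "\<sigma> = sig t"
  have sg: "t \<le> \<sigma>" "\<sigma> \<le> b" "g \<sigma> = g t" "\<forall>s\<in>{a..b}. \<sigma> < s \<longrightarrow> g t < g s"
    using sig_props[OF t] unfolding \<sigma>_def by auto
  show ?thesis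
  proof (cases "\<sigma> < b")
    case True
    obtain r where r: "r > \<sigma>" "g r < gp \<sigma> + \<eta>" using gp_approx[OF eta] by blast
    have gpe: "gp \<sigma> = g \<sigma>" using gjump_eq[of \<sigma>] j0 unfolding \<sigma>_def by simp
    define r' where "r' = min r b"
    have r': "\<sigma> < r'" "r' \<in> {a..b}" "g r' \<le> g r" using r True sg t unfolding r'_def
      by (auto intro: monoD')
    have gr: "g t < g r'" using sg(4) r' by blast
    show ?thesis
    proof (intro exI[of _ "g r' - g t"] conjI ballI impI)
      show "g r' - g t > 0" using gr by simp
    next
      fix s assume s: "s \<in> {a..b}" "g t < g s \<and> g s < g t + (g r' - g t)"
      then have "J s \<le> g r' - g s" using J_le[OF s(1)] by simp
      also have "\<dots> < g r' - g t" using s by simp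
      also have "\<dots> < \<eta>" using r r' gpe sg(3) by simp
      finally show "J s < \<eta>" .
    qed
  next
    case False
    then have sb: "\<sigma> = b" using sg by simp
    show ?thesis
    proof (intro exI[of _ 1] conjI ballI impI)
      fix s assume s: "s \<in> {a..b}" "g t < g s \<and> g s < g t + 1"
      have "g s \<le> g \<sigma>" using s sb monoD' by simp
      then show "J s < \<eta>" using s sg(3) by simp
    qed simp
  qed
qed

lemma sufficiency:
  fixes P :: "real \<Rightarrow> 'b::real_normed_field"
  assumes P: "BCg g a b P"
    and H: "\<forall>t\<in>{a..b}. gjump g (sig t) > 0 \<and> LA t \<longrightarrow> P t = 0"
    and t: "t \<in> {a..b}"
  shows "g_continuous_at g a b (\<lambda>s. P s * of_real (J s)) t"
proof -
  define Q where "Q = (\<lambda>s. P s * (of_real (J s) :: 'b))"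
  define \<sigma> where "\<sigma> = sig t"
  define j where "j = gjump g \<sigma>"
  have sg: "t \<le> \<sigma>" "\<sigma> \<le> b" "g \<sigma> = g t" "\<forall>s\<in>{a..b}. \<sigma> < s \<longrightarrow> g t < g s"
    "\<forall>s\<in>{a..b}. g s = g t \<longrightarrow> s \<le> \<sigma>"
    using sig_props[OF t] unfolding \<sigma>_def by auto
  have j0: "j \<ge> 0" unfolding j_def by (rule gjump_nonneg)
  obtain M where M: "M > 0" "\<And>s. s \<in> {a..b} \<Longrightarrow> norm (P s) \<le> M"
    using bound_pos[OF P] by blast
  have nQ: "\<And>s. norm (Q s) = norm (P s) * J s" unfolding Q_def by (rule norm_Q)
  have lev: "\<And>s. s \<in> {a..b} \<Longrightarrow> g s = g t \<Longrightarrow> P s = P t"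
    using BCg_level[OF P _ t] by blast
  have gap: "\<And>s. s \<in> {a..b} \<Longrightarrow> g t < g s \<Longrightarrow> g t + j \<le> g s"
  proof -
    fix s assume s: "s \<in> {a..b}" "g t < g s"
    have "\<sigma> < s"
    proof (rule ccontr)
      assume "\<not> \<sigma> < s"
      then have "g s \<le> g \<sigma>" using monoD' by simp
      then show False using s sg(3) by simp
    qed
    then have "j \<le> g s - g \<sigma>" unfolding j_def by (rule gjump_le)
    then show "g t + j \<le> g s" using sg(3) by simp
  qed
  show ?thesis
    unfolding Q_def[symmetric] g_continuous_at_def
  proof (intro allI impI)
    fix e :: real assume e: "e > 0"
    show "\<exists>d>0. \<forall>s\<in>{a..b}. \<bar>g t - g s\<bar> < d \<longrightarrow> norm (Q t - Q s) < e"
    proof (cases "P t = 0 \<or> j = 0")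
      case True
      have Zlev: "\<And>s. s \<in> {a..b} \<Longrightarrow> g s = g t \<Longrightarrow> Q s = 0"
      proof -
        fix s assume s: "s \<in> {a..b}" "g s = g t"
        show "Q s = 0"
        proof (cases "P t = 0")
          case True then show ?thesis using lev[OF s] unfolding Q_def by simp
        next
          case False
          then have "j = 0" using \<open>P t = 0 \<or> j = 0\<close> by simp
          have "J s \<le> gjump g (sig s)" by (rule J_le_sig[OF s(1)])
          also have "sig s = \<sigma>" unfolding \<sigma>_def using s(2) by (rule sig_level)
          finally have "J s \<le> 0" using \<open>j = 0\<close> unfolding j_def by simp
          then have "J s = 0" using J_nonneg[of s] by simp
          then show ?thesis unfolding Q_def by simp
        qed
      qed
      have Qt: "Q t = 0" using Zlev[OF t] by simp
      define \<eta> where "\<eta> = e / M"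
      have eta: "\<eta> > 0" using e M by (simp add: \<eta>_def)
      have small: "\<And>s. s \<in> {a..b} \<Longrightarrow> J s < \<eta> \<Longrightarrow> norm (Q s) < e"
      proof -
        fix s assume s: "s \<in> {a..b}" "J s < \<eta>"
        have "norm (Q s) \<le> M * J s" unfolding nQ
          using M(2)[OF s(1)] J_nonneg[of s] by (simp add: mult_right_mono)
        also have "\<dots> < M * \<eta>" using s M by simp
        also have "\<dots> = e" using M by (simp add: \<eta>_def)
        finally show "norm (Q s) < e" .
      qed
      obtain d2 where d2: "d2 > 0" "\<And>s. s \<in> {a..b} \<Longrightarrow> g t < g s \<Longrightarrow> g s < g t + d2 \<Longrightarrow> J s < \<eta> \<or> j > 0 \<and> d2 \<le> j"
      proof (cases "j > 0")
        case True
        show ?thesis using that[of j] True by blast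
      next
        case False
        then have "gjump g (sig t) = 0" using j0 unfolding j_def \<sigma>_def by simp
        then obtain d where "d > 0" "\<forall>s\<in>{a..b}. g t < g s \<and> g s < g t + d \<longrightarrow> J s < \<eta>"
          using right_small[OF t _ eta] by blast
        then show ?thesis using that[of d] by blast
      qed
      show ?thesis
      proof (intro exI[of _ "min \<eta> d2"] conjI ballI impI)
        show "min \<eta> d2 > 0" using eta d2 by simp
      next
        fix s assume s: "s \<in> {a..b}" "\<bar>g t - g s\<bar> < min \<eta> d2"
        consider "g s = g t" | "g s < g t" | "g t < g s" by linarith
        then show "norm (Q t - Q s) < e"
        proof cases
          case 1 then show ?thesis using Zlev[OF s(1)] Qt e by simp
        next
          case 2
          have "J s \<le> g t - g s" using J_le[OF s(1) 2] .
          also have "\<dots> < \<eta>" using s(2) by (auto simp: abs_less_iff)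
          finally show ?thesis using small[OF s(1)] Qt by simp
        next
          case 3
          have lt: "g s < g t + d2" using s(2) by (auto simp: abs_less_iff)
          show ?thesis
          proof (cases "J s < \<eta>")
            case True then show ?thesis using small[OF s(1)] Qt by simp
          next
            case False
            then have "j > 0 \<and> d2 \<le> j" using d2(2)[OF s(1) 3 lt] by simp
            then show ?thesis using gap[OF s(1) 3] lt by simp
          qed
        qed
      qed
    next
      case False
      then have Pt: "P t \<noteq> 0" and jp: "j > 0" using j0 by auto
      have nLA: "\<not> LA t" using H t Pt jp unfolding j_def \<sigma>_def by blast
      then obtain d0 where d0: "d0 > 0" "\<And>s. s \<in> {a..b} \<Longrightarrow> \<not> (g t - d0 < g s \<and> g s < g t)"
        unfolding LA_def by blast
      have Jlev: "\<And>s. s \<in> {a..b} \<Longrightarrow> g s = g t \<Longrightarrow> J s = j"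
      proof -
        fix s assume s: "s \<in> {a..b}" "g s = g t"
        have "\<not> LA s" using LA_level[OF s(2)] nLA by simp
        then have "J s = gjump g (sig s)" using lev_J[OF s(1)] by simp
        also have "sig s = \<sigma>" unfolding \<sigma>_def using s(2) by (rule sig_level)
        finally show "J s = j" unfolding j_def .
      qed
      show ?thesis
      proof (intro exI[of _ "min d0 j"] conjI ballI impI)
        show "min d0 j > 0" using d0 jp by simp
      next
        fix s assume s: "s \<in> {a..b}" "\<bar>g t - g s\<bar> < min d0 j"
        consider "g s = g t" | "g s < g t" | "g t < g s" by linarith
        then show "norm (Q t - Q s) < e"
        proof cases
          case 1
          have "Q s = Q t" unfolding Q_def using lev[OF s(1) 1] Jlev[OF s(1) 1] Jlev[OF t refl] by simp
          then show ?thesis using e by simp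
        next
          case 2 then show ?thesis using d0(2)[OF s(1)] s by auto
        next
          case 3 then show ?thesis using gap[OF s(1) 3] s by auto
        qed
      qed
    qed
  qed
qed

end


context gsetup
begin

lemma main_generic:
  fixes f1 f2 :: "real \<Rightarrow> 'b::real_normed_field"
  assumes f1: "BC1g g a b f1" and f2: "BC1g g a b f2"
  shows "BC1g g a b (\<lambda>t. f1 t * f2 t) \<longleftrightarrow>
    (\<forall>t\<in>({tstar g a<..<b} \<inter> Ag g a b) - Hg g. gderiv g a b f1 t * gderiv g a b f2 t = 0)"
proof -
  define D1 where "D1 = gderiv g a b f1"
  define D2 where "D2 = gderiv g a b f2"
  define P where "P = (\<lambda>t. D1 t * D2 t)"
  define Q where "Q = (\<lambda>t. P t * (of_real (J t) :: 'b))"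
  define F where "F = (\<lambda>t. D1 t * f2 t + f1 t * D2 t)"
  define Hd where "Hd = (\<lambda>t. F t + Q t)"
  have B1: "BCg g a b f1" "BCg g a b D1" "\<forall>t\<in>{a..b}. g_differentiable g a b f1 t"
    using f1 unfolding BC1g_def D1_def by auto
  have B2: "BCg g a b f2" "BCg g a b D2" "\<forall>t\<in>{a..b}. g_differentiable g a b f2 t"
    using f2 unfolding BC1g_def D2_def by auto
  have BP: "BCg g a b P" unfolding P_def using B1(2) B2(2) by (rule BCg_mult)
  have BF: "BCg g a b F" unfolding F_def
    by (intro BCg_add BCg_mult B1 B2)
  have hd: "\<And>t. t \<in> {a..b} \<Longrightarrow> has_gderiv g a b (\<lambda>s. f1 s * f2 s) t (Hd t)"
  proof -
    fix t assume t: "t \<in> {a..b}"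
    have d1: "has_gderiv g a b f1 t (D1 t)" unfolding D1_def using B1(3) t gderiv_has by blast
    have d2: "has_gderiv g a b f2 t (D2 t)" unfolding D2_def using B2(3) t gderiv_has by blast
    have tp: "t \<le> tstar g t" "tstar g t \<le> b" "g (tstar g t) = g t" using tstar_props[of t] t by auto
    have tpab: "tstar g t \<in> {a..b}" using tp t by auto
    have e1: "f1 (tstar g t) = f1 t" using BCg_level[OF B1(1) tpab t tp(3)] .
    have e2: "f2 (tstar g t) = f2 t" using BCg_level[OF B2(1) tpab t tp(3)] .
    have "has_gderiv g a b (\<lambda>s. f1 s * f2 s) t
       (D1 t * f2 (tstar g t) + f1 (tstar g t) * D2 t + D1 t * D2 t * of_real (gjump g (tstar g t)))"
      by (rule prod_rule[OF t d1 d2])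
    moreover have "D1 t * f2 (tstar g t) + f1 (tstar g t) * D2 t + D1 t * D2 t * of_real (gjump g (tstar g t)) = Hd t"
      unfolding Hd_def F_def Q_def P_def J_def e1 e2 by simp
    ultimately show "has_gderiv g a b (\<lambda>s. f1 s * f2 s) t (Hd t)" by simp
  qed
  have gd: "\<And>t. t \<in> {a..b} \<Longrightarrow> gderiv g a b (\<lambda>s. f1 s * f2 s) t = Hd t"
    using hd gderiv_eq by blast
  have Bprod: "BCg g a b (\<lambda>s. f1 s * f2 s)" using B1(1) B2(1) by (rule BCg_mult)
  have step1: "BC1g g a b (\<lambda>t. f1 t * f2 t) \<longleftrightarrow> BCg g a b Hd"
  proof -
    have "\<forall>t\<in>{a..b}. g_differentiable g a b (\<lambda>s. f1 s * f2 s) t"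
      using hd unfolding g_differentiable_def by blast
    then have "BC1g g a b (\<lambda>t. f1 t * f2 t) \<longleftrightarrow> BCg g a b (gderiv g a b (\<lambda>s. f1 s * f2 s))"
      using Bprod unfolding BC1g_def by blast
    also have "\<dots> \<longleftrightarrow> BCg g a b Hd" using gd by (rule BCg_cong)
    finally show ?thesis .
  qed
  have step2: "BCg g a b Hd \<longleftrightarrow> BCg g a b Q"
  proof
    assume "BCg g a b Q"
    then show "BCg g a b Hd" unfolding Hd_def using BF by (intro BCg_add)
  next
    assume "BCg g a b Hd"
    then have "BCg g a b (\<lambda>s. Hd s + - F s)" using BF by (intro BCg_add BCg_minus)
    moreover have "\<And>s. Hd s + - F s = Q s" unfolding Hd_def by simp
    ultimately show "BCg g a b Q" by simp
  qed
  obtain M where M: "M > 0" "\<And>s. s \<in> {a..b} \<Longrightarrow> norm (P s) \<le> M"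
    using bound_pos[OF BP] by blast
  have bQ: "bounded (Q ` {a..b})" unfolding bounded_img_iff
  proof (intro exI ballI)
    fix s assume s: "s \<in> {a..b}"
    have "norm (Q s) = norm (P s) * J s" unfolding Q_def by (rule norm_Q)
    also have "\<dots> \<le> M * (g b - g a)"
      using M(2)[OF s] J_nonneg[of s] J_bound[OF s] M(1) by (intro mult_mono) auto
    finally show "norm (Q s) \<le> M * (g b - g a)" .
  qed
  have step3: "BCg g a b Q \<longleftrightarrow> (\<forall>t\<in>{a..b}. g_continuous_at g a b Q t)"
    using bQ unfolding BCg_def by blast
  have aa: "a \<le> tstar g a" using tstar_props[of a] ab by simp
  have sub: "\<And>t. t \<in> ({tstar g a<..<b} \<inter> Ag g a b) - Hg g \<Longrightarrow> t \<in> {a..b}"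
    using aa by auto
  have step4: "(\<forall>t\<in>{a..b}. g_continuous_at g a b Q t) \<longleftrightarrow>
      (\<forall>t\<in>({tstar g a<..<b} \<inter> Ag g a b) - Hg g. P t = 0)"
  proof
    assume C: "\<forall>t\<in>{a..b}. g_continuous_at g a b Q t"
    show "\<forall>t\<in>({tstar g a<..<b} \<inter> Ag g a b) - Hg g. P t = 0"
    proof
      fix t assume tt: "t \<in> ({tstar g a<..<b} \<inter> Ag g a b) - Hg g"
      have t: "t \<in> {a..b}" using sub[OF tt] .
      have "gjump g (sig t) > 0 \<and> LA t" using bad_iff[OF t] tt by blast
      then show "P t = 0" using necessity[OF BP C[unfolded Q_def] t] by blast
    qed
  next
    assume A: "\<forall>t\<in>({tstar g a<..<b} \<inter> Ag g a b) - Hg g. P t = 0"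
    have H: "\<forall>t\<in>{a..b}. gjump g (sig t) > 0 \<and> LA t \<longrightarrow> P t = 0"
      using A bad_iff by blast
    show "\<forall>t\<in>{a..b}. g_continuous_at g a b Q t"
      unfolding Q_def using sufficiency[OF BP H] by blast
  qed
  show ?thesis
    using step1 step2 step3 step4 unfolding P_def D1_def D2_def by simp
qed

end

theorem theorem5p7:
  fixes g :: "real \<Rightarrow> real" and a b :: real
  assumes mono: "mono g"
    and leftcont: "\<And>t. (g \<longlongrightarrow> g t) (at_left t)"
    and ab: "a < b"
    and a_ok: "a \<notin> Ng_minus g \<union> Dg g"
    and b_ok: "b \<notin> Cg g \<union> Ng_plus g \<union> Dg g"
  shows "(\<forall>f1 f2 :: real \<Rightarrow> real. BC1g g a b f1 \<and> BC1g g a b f2 \<longrightarrow>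
            (BC1g g a b (\<lambda>t. f1 t * f2 t) \<longleftrightarrow>
             (\<forall>t \<in> ({tstar g a<..<b} \<inter> Ag g a b) - Hg g.
                gderiv g a b f1 t * gderiv g a b f2 t = 0)))
       \<and> (\<forall>f1 f2 :: real \<Rightarrow> complex. BC1g g a b f1 \<and> BC1g g a b f2 \<longrightarrow>
            (BC1g g a b (\<lambda>t. f1 t * f2 t) \<longleftrightarrow>
             (\<forall>t \<in> ({tstar g a<..<b} \<inter> Ag g a b) - Hg g.
                gderiv g a b f1 t * gderiv g a b f2 t = 0)))"
proof -
  interpret G: gsetup g a b
    by (rule gsetup.intro) (fact mono, fact leftcont, fact ab, fact a_ok, fact b_ok)
  have R: "\<forall>f1 f2 :: real \<Rightarrow> real. BC1g g a b f1 \<and> BC1g g a b f2 \<longrightarrow>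
            (BC1g g a b (\<lambda>t. f1 t * f2 t) \<longleftrightarrow>
             (\<forall>t \<in> ({tstar g a<..<b} \<inter> Ag g a b) - Hg g.
                gderiv g a b f1 t * gderiv g a b f2 t = 0))"
  proof (intro allI impI)
    fix f1 f2 :: "real \<Rightarrow> real"
    assume "BC1g g a b f1 \<and> BC1g g a b f2"
    then show "BC1g g a b (\<lambda>t. f1 t * f2 t) \<longleftrightarrow>
             (\<forall>t \<in> ({tstar g a<..<b} \<inter> Ag g a b) - Hg g.
                gderiv g a b f1 t * gderiv g a b f2 t = 0)"
      using G.main_generic[of f1 f2] by (elim conjE)
  qed
  have C: "\<forall>f1 f2 :: real \<Rightarrow> complex. BC1g g a b f1 \<and> BC1g g a b f2 \<longrightarrow>
            (BC1g g a b (\<lambda>t. f1 t * f2 t) \<longleftrightarrow>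
             (\<forall>t \<in> ({tstar g a<..<b} \<inter> Ag g a b) - Hg g.
                gderiv g a b f1 t * gderiv g a b f2 t = 0))"
  proof (intro allI impI)
    fix f1 f2 :: "real \<Rightarrow> complex"
    assume "BC1g g a b f1 \<and> BC1g g a b f2"
    then show "BC1g g a b (\<lambda>t. f1 t * f2 t) \<longleftrightarrow>
             (\<forall>t \<in> ({tstar g a<..<b} \<inter> Ag g a b) - Hg g.
                gderiv g a b f1 t * gderiv g a b f2 t = 0)"
      using G.main_generic[of f1 f2] by (elim conjE)
  qed
  show ?thesis using R C by (rule conjI)
qed


end
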